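(* Fix $\epsilon>0$, $\psi$ as in the context, and $\eta>0$ small enough that for $\lambda\in P(\epsilon,\eta)$ the cuts of $h_\lambda$ lie outside the closed unit disk. There is a constant $C$, depending only on $p,\epsilon,\psi,\eta$, such that for all $R>1$ and all $\lambda\in P(\epsilon,\eta)$, $$\oint_{\Gamma_R}|g_\lambda(u)|\,\Big(\frac{1}{1+|u|}\Big)^{2+\frac1p}\,|du|\le C\,|\lambda|^{\frac1{4p^2}}.$$
   Context: Fix an integer $p\ge2$. Let $T_p(z)$ be the Fuss–Catalan function: the unique solution of $zT^p-T+1=0$ analytic on $\mathbb C\setminus[(p-1)^{p-1}/p^p,\infty)$ with $T_p(0)=1$. Square roots are principal branches. For $\lambda\in\mathbb C$ set $f_\lambda(u)=\sqrt{T_p(-\lambda u^{2p-2})}$, $h_\lambda(u)=uf_\lambda(u)$ and $g_\lambda(u)=h_\lambda(u)-u$. For $\epsilon,\eta>0$ let $P(\epsilon,\eta)=\{\lambda\in\mathbb C:0<|\lambda|<\eta,\ |\arg\lambda|<\pi-\epsilon\}$. The function $h_\lambda$ is analytic away from cuts lying on the rays $\arg u=\frac{\pi-\arg\lambda}{2p-2}+\frac{k\pi}{p-1}$ ($k=-p+2,\dots,p-1$), at $|u|\ge|\lambda|^{-1/(2p-2)}(p-1)^{1/2}p^{-p/(2p-2)}$. Fix an angle $\psi\in(0,\pi/4)$, small enough (depending on $\epsilon,p$) that for every $\lambda$ with $|\arg\lambda|\le\pi-\epsilon$ these rays avoid the double sector $\{|\arg u|\le\psi\}\cup\{|\arg(-u)|\le\psi\}$.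 For $R>1$, the keyhole contour $\Gamma_R$ is the positively oriented boundary of $$D_R=\{|u|<R\}\cap\big(\{|u|<1\}\cup\{|\arg u|<\psi\}\cup\{|\arg(-u)|<\psi\}\big).$$ *)

theory Defs
  imports "HOL-Complex_Analysis.Complex_Analysis"
begin

definition FC_dom :: "nat \<Rightarrow> complex set" where
  "FC_dom p = - {complex_of_real x | x. x \<ge> real (p - 1) ^ (p - 1) / real p ^ p}"

text \<open>The Fuss--Catalan function T_p: the unique solution of z T^p - T + 1 = 0 analytic
  on FC_dom p with T_p(0) = 1 (set to 0 off the domain, to make the choice unique).\<close>
definition FussCatalan :: "nat \<Rightarrow> complex \<Rightarrow> complex" where
  "FussCatalan p = (THE T. T holomorphic_on FC_dom p \<and> T 0 = 1 \<and>
      (\<forall>z\<in>FC_dom p. z * T z ^ p - T z + 1 = 0) \<and>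
      (\<forall>z. z \<notin> FC_dom p \<longrightarrow> T z = 0))"

definition f_lam :: "nat \<Rightarrow> complex \<Rightarrow> complex \<Rightarrow> complex" where
  "f_lam p lam u = csqrt (FussCatalan p (- lam * u ^ (2 * p - 2)))"

definition h_lam :: "nat \<Rightarrow> complex \<Rightarrow> complex \<Rightarrow> complex" where
  "h_lam p lam u = u * f_lam p lam u"

definition g_lam :: "nat \<Rightarrow> complex \<Rightarrow> complex \<Rightarrow> complex" where
  "g_lam p lam u = h_lam p lam u - u"

definition Pset :: "real \<Rightarrow> real \<Rightarrow> complex set" where
  "Pset \<epsilon> \<eta> = {lam. 0 < cmod lam \<and> cmod lam < \<eta> \<and> \<bar>Arg lam\<bar> < pi - \<epsilon>}"

text \<open>Modulus at which the cuts of h_lambda start.\<close>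
definition cut_radius :: "nat \<Rightarrow> complex \<Rightarrow> real" where
  "cut_radius p lam = cmod lam powr (- 1 / (2 * real p - 2)) * sqrt (real p - 1)
                      * real p powr (- real p / (2 * real p - 2))"

text \<open>The admissibility condition on psi: the cut rays avoid the closed double sector.\<close>
definition psi_ok :: "nat \<Rightarrow> real \<Rightarrow> real \<Rightarrow> bool" where
  "psi_ok p \<epsilon> \<psi> \<longleftrightarrow> 0 < \<psi> \<and> \<psi> < pi / 4 \<and>
     (\<forall>lam. lam \<noteq> 0 \<and> \<bar>Arg lam\<bar> \<le> pi - \<epsilon> \<longrightarrow>
       (\<forall>k::int. - int p + 2 \<le> k \<and> k \<le> int p - 1 \<longrightarrow>
         (\<forall>r::real. r > 0 \<longrightarrow>
           (let u = complex_of_real r * cis ((pi - Arg lam) / (2 * real p - 2) + real_of_int k * pi / (real p - 1))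
            in \<not> (\<bar>Arg u\<bar> \<le> \<psi> \<or> \<bar>Arg (- u)\<bar> \<le> \<psi>)))))"

text \<open>Positively oriented keyhole boundary of D_R.\<close>
definition keyhole :: "real \<Rightarrow> real \<Rightarrow> real \<Rightarrow> complex" where
  "keyhole \<psi> R =
     linepath (cis (- \<psi>)) (of_real R * cis (- \<psi>)) +++
     part_circlepath 0 R (- \<psi>) \<psi> +++
     linepath (of_real R * cis \<psi>) (cis \<psi>) +++
     part_circlepath 0 1 \<psi> (pi - \<psi>) +++
     linepath (cis (pi - \<psi>)) (of_real R * cis (pi - \<psi>)) +++
     part_circlepath 0 R (pi - \<psi>) (pi + \<psi>) +++
     linepath (of_real R * cis (pi + \<psi>)) (cis (pi + \<psi>)) +++
     part_circlepath 0 1 (pi + \<psi>) (2 * pi - \<psi>)"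

definition arclength_integral :: "(complex \<Rightarrow> real) \<Rightarrow> (real \<Rightarrow> complex) \<Rightarrow> real" where
  "arclength_integral F \<gamma> =
     integral {0..1} (\<lambda>t. F (\<gamma> t) * norm (vector_derivative \<gamma> (at t)))"

end

theory Submission
  imports Defs "HOL-Computational_Algebra.Fundamental_Theorem_Algebra"
begin

definition Pz :: "nat \<Rightarrow> complex \<Rightarrow> complex poly" where
  "Pz p z = [:z:] + monom 1 (p-1) * [:-1,1:]"

lemma poly_Pz: "poly (Pz p z) w = z + w^(p-1)*(w-1)"
  by (simp add: Pz_def poly_monom algebra_simps)

lemma degree_Pz:
  assumes "p \<ge> 2" shows "degree (Pz p z) = p" "lead_coeff (Pz p z) = 1"
proof -
  have d: "degree (monom (1::complex) (p-1) * [:-1,1:]) = p"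
    using assms by (subst degree_mult_eq) (auto simp: degree_monom_eq)
  show "degree (Pz p z) = p"
    unfolding Pz_def using assms d by (subst degree_add_eq_right) auto
  obtain k where k: "p = Suc k" using assms by (cases p) auto
  have "coeff (Pz p z) p = 1"
    using k by (simp add: coeff_mult Pz_def)
  then show "lead_coeff (Pz p z) = 1"
    unfolding \<open>degree (Pz p z) = p\<close> .
qed

lemma Pz_nz: "p \<ge> 2 \<Longrightarrow> Pz p z \<noteq> 0"
  using degree_Pz(1)[of p z] by auto

lemma Pz_factor:
  assumes "p \<ge> 2"
  shows "poly (Pz p z) w = (\<Prod>x\<in>#proots (Pz p z). w - x)"
proof -
  have "poly (smult (lead_coeff (Pz p z)) (\<Prod>x\<in>#proots (Pz p z). [:-x, 1:])) w = poly (Pz p z) w"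
    by (subst complex_poly_decompose_multiset) simp
  then show ?thesis using degree_Pz[OF assms] by (simp add: poly_prod_mset)
qed

lemma prod_mset_norm_ge:
  "(\<forall>x\<in>#A. m \<le> norm (a - x)) \<Longrightarrow> 0 \<le> m \<Longrightarrow> m ^ size A \<le> norm (\<Prod>x\<in>#A. (a - x::complex))"
proof (induction A)
  case empty then show ?case by simp
next
  case (add x A)
  then have "m * m ^ size A \<le> norm (a - x) * norm (\<Prod>x\<in>#A. (a - x::complex))"
    by (intro mult_mono) auto
  then show ?case by (simp add: norm_mult)
qed

lemma close_root:
  assumes "p \<ge> 2"
  shows "\<exists>r. poly (Pz p z) r = 0 \<and> norm (a - r) ^ p \<le> norm (poly (Pz p z) a)"
proof -
  define A where "A = proots (Pz p z)"
  have sz: "size A = p" unfolding A_def using degree_Pz[OF assms] by (simp add: size_proots_complex)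
  have S: "finite (set_mset A)" "set_mset A \<noteq> {}" using sz assms by auto
  define m where "m = Min ((\<lambda>x. norm (a - x)) ` set_mset A)"
  have "m \<in> (\<lambda>x. norm (a - x)) ` set_mset A" unfolding m_def using S by (intro Min_in) auto
  then obtain r where r: "r \<in># A" "m = norm (a - r)" by auto
  have le: "\<forall>x\<in>#A. m \<le> norm (a - x)" unfolding m_def using S by auto
  have "m ^ size A \<le> norm (\<Prod>x\<in>#A. (a - x))" by (rule prod_mset_norm_ge[OF le]) (simp add: r)
  then have "norm (a - r) ^ p \<le> norm (poly (Pz p z) a)"
    using Pz_factor[OF assms, of z a] r sz A_def by simp
  moreover have "poly (Pz p z) r = 0" using r A_def Pz_nz[OF assms] by simp
  ultimately show ?thesis by blast
qed

lemma roots_finite_ne: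
  assumes "p \<ge> 2"
  shows "finite {w. poly (Pz p z) w = 0}" "{w. poly (Pz p z) w = 0} \<noteq> {}"
proof -
  have "set_mset (proots (Pz p z)) = {w. poly (Pz p z) w = 0}" using Pz_nz[OF assms] by simp
  moreover have "size (proots (Pz p z)) = p" using degree_Pz[OF assms] by (simp add: size_proots_complex)
  ultimately show "finite {w. poly (Pz p z) w = 0}" "{w. poly (Pz p z) w = 0} \<noteq> {}"
    using assms by (metis finite_set_mset, metis set_mset_eq_empty_iff size_empty not_numeral_le_zero)
qed

lemma Im_pow_bound:
  fixes w :: complex
  shows "\<bar>Im (w ^ Suc n)\<bar> \<le> real (Suc n) * norm w ^ n * \<bar>Im w\<bar>"
proof (induction n)
  case 0 then show ?case by simp
next
  case (Suc n)
  have "Im (w ^ Suc (Suc n)) = Re (w ^ Suc n) * Im w + Im (w ^ Suc n) * Re w"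
    by (simp add: algebra_simps)
  also have "\<bar>\<dots>\<bar> \<le> \<bar>Re (w ^ Suc n)\<bar> * \<bar>Im w\<bar> + \<bar>Im (w ^ Suc n)\<bar> * \<bar>Re w\<bar>"
    by (simp add: abs_mult[symmetric] abs_triangle_ineq)
  also have "\<dots> \<le> norm w ^ Suc n * \<bar>Im w\<bar> + (real (Suc n) * norm w ^ n * \<bar>Im w\<bar>) * norm w"
    using abs_Re_le_cmod[of "w ^ Suc n"] abs_Re_le_cmod[of w]
    by (intro add_mono mult_mono Suc.IH) (auto simp: norm_power simp del: power_Suc)
  also have "\<dots> = real (Suc (Suc n)) * norm w ^ Suc n * \<bar>Im w\<bar>" by (simp add: algebra_simps)
  finally show ?case .
qed

definition cFC :: "nat \<Rightarrow> real" where "cFC p = real (p - 1) ^ (p - 1) / real p ^ p"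

lemma FC_dom_iff: "z \<in> FC_dom p \<longleftrightarrow> \<not> (Im z = 0 \<and> Re z \<ge> cFC p)"
  unfolding FC_dom_def cFC_def
  by (auto simp: complex_eq_iff)

lemma root_iff: "poly (Pz p z) w = 0 \<longleftrightarrow> z = w^(p-1) * (1 - w)"
  by (auto simp: poly_Pz algebra_simps)

lemma pow_split: "1 \<le> p \<Longrightarrow> (t::'a::comm_monoid_mult)^p = t^(p-1) * t"
proof -
  assume "1 \<le> p"
  then have "p = Suc (p-1)" by simp
  then have "t^p = t^Suc(p-1)" by (rule arg_cong)
  also have "\<dots> = t^(p-1) * t" by (rule power_Suc2)
  finally show ?thesis .
qed

lemma cFC_val: "p \<ge> 2 \<Longrightarrow> ((real p - 1)/real p)^(p-1) * (1 - (real p - 1)/real p) = cFC p"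
proof -
  assume p: "p \<ge> 2"
  have "((real p - 1)/real p)^(p-1) * (1 - (real p - 1)/real p) = (real p - 1)^(p-1) / (real p ^ (p-1) * real p)"
    using p by (simp add: power_divide field_simps)
  also have "real p ^ (p-1) * real p = real p ^ p" using p pow_split[of p "real p"] by simp
  finally show ?thesis using p by (simp add: cFC_def of_nat_diff)
qed

lemma tie:
  assumes p: "p \<ge> 2" and z: "z \<in> FC_dom p"
    and r1: "poly (Pz p z) w1 = 0" and r2: "poly (Pz p z) w2 = 0"
    and ne: "w1 \<noteq> w2" and eqn: "norm w1 = norm w2"
    and mx: "\<forall>v. poly (Pz p z) v = 0 \<longrightarrow> norm v \<le> norm w1"
  shows False
proof -
  define \<rho> where "\<rho> = norm w1"
  have e1: "z = w1^(p-1) * (1 - w1)" and e2: "z = w2^(p-1) * (1 - w2)" using r1 r2 root_iff by auto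
  have "\<rho> \<noteq> 0" using ne eqn \<rho>_def by auto
  then have \<rho>pos: "\<rho> > 0" using \<rho>_def by simp
  have "norm z = \<rho>^(p-1) * norm (1 - w1)" using e1 \<rho>_def by (simp add: norm_mult norm_power)
  moreover have "norm z = \<rho>^(p-1) * norm (1 - w2)" using e2 \<rho>_def eqn by (simp add: norm_mult norm_power)
  ultimately have n1: "norm (1 - w1) = norm (1 - w2)" using \<rho>pos by simp
  have sq1: "(Re w1)^2 + (Im w1)^2 = (Re w2)^2 + (Im w2)^2" using eqn cmod_power2[of w1] cmod_power2[of w2]
    by simp
  have sq2: "(1 - Re w1)^2 + (Im w1)^2 = (1 - Re w2)^2 + (Im w2)^2"
    using n1 cmod_power2[of "1 - w1"] cmod_power2[of "1 - w2"] by simp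
  have re: "Re w1 = Re w2" using sq1 sq2 by (simp add: power2_eq_square algebra_simps)
  then have "(Im w1)^2 = (Im w2)^2" using sq1 by simp
  then have "Im w2 = Im w1 \<or> Im w2 = - Im w1" by (auto simp: power2_eq_iff)
  then have w2c: "w2 = cnj w1" and im: "Im w1 \<noteq> 0" using re ne by (auto simp: complex_eq_iff)
  have "cnj z = z" using e1 e2 w2c by simp
  then have imz: "Im z = 0" by (simp add: complex_eq_iff)
  define x where "x = Re z"
  have zx: "z = of_real x" using imz x_def by (simp add: complex_eq_iff)
  have xc: "x < cFC p" using z imz FC_dom_iff x_def by auto
  have ReLt: "Re w1 < \<rho>"
  proof -
    have "(Re w1)^2 < \<rho>^2" using im \<rho>_def cmod_power2[of w1] by auto
    then show ?thesis using \<rho>pos by (smt (verit) power_mono)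
  qed
  have p1: "p - 1 \<ge> 1" using p by simp
  show False
  proof (cases "x \<le> 0")
    case True
    have "\<exists>t\<ge>1. t \<le> 2 - x \<and> (\<lambda>t. t^p - t^(p-1)) t = -x"
    proof (rule IVT')
      show "(\<lambda>t. t^p - t^(p-1)) 1 \<le> -x" using True by simp
      have "(2 - x)^p - (2 - x)^(p-1) = (2-x)^(p-1) * (1 - x)"
        using p pow_split[of p "2-x"] by (simp add: algebra_simps)
      moreover have "1 \<le> 2 - x" using True by simp
      then have "1 \<le> (2-x)^(p-1)" by (rule one_le_power)
      then have "1 * (1 - x) \<le> (2-x)^(p-1) * (1 - x)" by (rule mult_right_mono) (use True in simp)
      ultimately show "-x \<le> (\<lambda>t. t^p - t^(p-1)) (2 - x)" by simp
    qed (use True in \<open>auto intro!: continuous_intros\<close>)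
    then obtain t where t: "t \<ge> 1" "t^p - t^(p-1) = -x" by auto
    have tp: "t^p = t^(p-1) * t" using p pow_split[of p t] by simp
    have "x = t^(p-1) * (1 - t)" using t(2) tp by (simp add: algebra_simps)
    then have "z = (of_real t)^(p-1) * (1 - of_real t)" unfolding zx by simp
    then have "poly (Pz p z) (of_real t) = 0" using root_iff by blast
    then have "t \<le> \<rho>" using mx \<rho>_def t by fastforce
    have n1gt: "norm (1 - w1) > \<rho> - 1"
    proof -
      have "norm (1 - w1)^2 = (1 - Re w1)^2 + (Im w1)^2"
        using cmod_power2[of "1 - w1"] by simp
      also have "\<dots> = 1 - 2 * Re w1 + \<rho>^2" using cmod_power2[of w1] \<rho>_def by (simp add: power2_eq_square algebra_simps)
      also have "\<dots> > (\<rho> - 1)^2" using ReLt by (simp add: power2_eq_square algebra_simps)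
      finally show ?thesis by (smt (verit) norm_ge_zero power_mono)
    qed
    have "norm z = \<rho>^(p-1) * norm (1 - w1)" using e1 \<rho>_def by (simp add: norm_mult norm_power)
    also have "\<dots> > t^(p-1) * (t - 1)"
    proof -
      have "t^(p-1) \<le> \<rho>^(p-1)" using \<open>t \<le> \<rho>\<close> t by (intro power_mono) auto
      moreover have "t - 1 < norm (1 - w1)" using n1gt \<open>t \<le> \<rho>\<close> by simp
      moreover have "t^(p-1) > 0" using t by simp
      ultimately show ?thesis
        by (smt (verit) mult_strict_left_mono mult_right_mono norm_ge_zero)
    qed
    finally have "norm z > t^(p-1) * (t-1)" .
    moreover have "norm z = -x" using zx True by simp
    moreover have "t^(p-1) * (t-1) = -x" using t tp by (simp add: algebra_simps)
    ultimately show False by simp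
  next
    case False
    define q where "q = (real p - 1) / real p"
    have q: "0 < q" "q < 1" using p unfolding q_def by auto
    have "\<exists>t\<ge>q. t \<le> 1 \<and> (\<lambda>t. t^(p-1) * (1 - t)) t = x"
    proof (rule IVT2)
      show "(\<lambda>t. t^(p-1) * (1 - t)) 1 \<le> x" using False by simp
      show "x \<le> (\<lambda>t. t^(p-1) * (1 - t)) q" using cFC_val[OF p] xc q_def by simp
    qed (use q in \<open>auto intro!: continuous_intros\<close>)
    then obtain t where t: "q \<le> t" "t \<le> 1" "t^(p-1) * (1 - t) = x" by auto
    have "t \<noteq> q" using t(3) cFC_val[OF p] xc q_def by auto
    then have tq: "t > q" using t by simp
    have "z = (of_real t)^(p-1) * (1 - of_real t)" unfolding zx using t(3)[symmetric] by simp
    then have "poly (Pz p z) (of_real t) = 0" using root_iff by blast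
    then have "t \<le> \<rho>" using mx \<rho>_def tq q by fastforce
    define n where "n = p - 1"
    have n: "n \<ge> 1" "p = Suc n" using p n_def by auto
    have ex: "of_real x = w1^n * (1 - w1)" using e1 zx n_def by simp
    have "of_real x * cnj (w1^n) = (w1^n * cnj (w1^n)) * (1 - w1)"
      unfolding ex by (simp only: mult_ac)
    also have "w1^n * cnj (w1^n) = of_real (\<rho>^(2*n))"
    proof -
      have "w1^n * cnj (w1^n) = of_real ((norm (w1^n))^2)" by (rule complex_norm_square[symmetric])
      also have "(norm (w1^n))^2 = \<rho>^(2*n)" using \<rho>_def by (simp add: norm_power power_mult[symmetric] mult.commute)
      finally show ?thesis .
    qed
    finally have "of_real x * cnj (w1^n) = of_real (\<rho>^(2*n)) * (1 - w1)" .
    then have "Im (of_real x * cnj (w1^n)) = Im (of_real (\<rho>^(2*n)) * (1 - w1))" by simp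
    then have imeq: "x * Im (w1^n) = \<rho>^(2*n) * Im w1" by (simp flip: complex_cnj_power)
    obtain m where m: "n = Suc m" using n by (cases n) auto
    have "\<rho>^(2*n) * \<bar>Im w1\<bar> = x * \<bar>Im (w1^n)\<bar>"
      using imeq False \<rho>pos by (metis abs_mult abs_of_nonneg abs_of_pos not_le zero_le_power less_le)
    also have "\<dots> \<le> x * (real n * \<rho>^m * \<bar>Im w1\<bar>)"
      using Im_pow_bound[of w1 m] m False \<rho>_def by (intro mult_left_mono) auto
    finally have A: "\<rho>^(2*n) * \<bar>Im w1\<bar> \<le> x * (real n * \<rho>^m * \<bar>Im w1\<bar>)" .
    have "\<rho>^(2*n) = \<rho>^m * \<rho>^p" using m n by (simp add: power_add[symmetric] mult_2)
    then have "\<rho>^m * (\<rho>^p * \<bar>Im w1\<bar>) \<le> \<rho>^m * (x * real n * \<bar>Im w1\<bar>)"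
      using A by (simp add: algebra_simps)
    then have "\<rho>^p * \<bar>Im w1\<bar> \<le> x * real n * \<bar>Im w1\<bar>" using \<rho>pos by simp
    then have B: "\<rho>^p \<le> x * real n" using im by simp
    have "t^p \<le> \<rho>^p" using \<open>t \<le> \<rho>\<close> q tq by (intro power_mono) auto
    also have "\<dots> \<le> t^(p-1) * (1 - t) * real n" using B t(3) by simp
    finally have "t^(p-1) * t \<le> t^(p-1) * ((1 - t) * real n)"
      using n by (simp add: algebra_simps)
    then have "t \<le> (1 - t) * real n" using q tq by simp
    then have "t * real p \<le> real p - 1" using n by (simp add: algebra_simps)
    then have "t \<le> q" unfolding q_def using p by (simp add: field_simps)
    then show False using tq by simp
  qed
qed

definition isMax where
  "isMax p z m \<longleftrightarrow> poly (Pz p z) m = 0 \<and> (\<forall>v. poly (Pz p z) v = 0 \<longrightarrow> v \<noteq> m \<longrightarrow> norm v < norm m)"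

definition Mroot where "Mroot p z = (THE m. isMax p z m)"

lemma isMax_unique: "isMax p z m \<Longrightarrow> isMax p z m' \<Longrightarrow> m = m'"
  unfolding isMax_def by (metis less_asym)

lemma ex_max:
  assumes "p \<ge> 2"
  shows "\<exists>m. poly (Pz p z) m = 0 \<and> (\<forall>v. poly (Pz p z) v = 0 \<longrightarrow> norm v \<le> norm m)"
proof -
  define S where "S = {w. poly (Pz p z) w = 0}"
  have S: "finite S" "S \<noteq> {}" using roots_finite_ne[OF assms] S_def by auto
  have "Max (norm ` S) \<in> norm ` S" using S by (intro Max_in) auto
  then obtain m where m: "m \<in> S" "norm m = Max (norm ` S)" by auto
  have "\<forall>v\<in>S. norm v \<le> norm m" using S m by auto
  then show ?thesis using m S_def by auto
qed

lemma isMax_Mroot: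
  assumes p: "p \<ge> 2" and z: "z \<in> FC_dom p"
  shows "isMax p z (Mroot p z)"
proof -
  obtain m where m: "poly (Pz p z) m = 0" "\<forall>v. poly (Pz p z) v = 0 \<longrightarrow> norm v \<le> norm m"
    using ex_max[OF p] by blast
  have "isMax p z m" unfolding isMax_def
  proof (intro conjI allI impI)
    fix v assume v: "poly (Pz p z) v = 0" "v \<noteq> m"
    have "norm v \<noteq> norm m"
    proof
      assume "norm v = norm m"
      then show False using tie[OF p z m(1) v(1) v(2)[symmetric]] m(2) by simp
    qed
    then show "norm v < norm m" using m(2) v by force
  qed (rule m(1))
  then show ?thesis unfolding Mroot_def
  proof (rule theI[where P="isMax p z"])
    fix x assume "isMax p z x"
    then show "x = m" using isMax_unique \<open>isMax p z m\<close> by blast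
  qed
qed

lemma poly_Pz_0: "p \<ge> 2 \<Longrightarrow> poly (Pz p z) 0 = z"
  by (simp add: poly_Pz)

lemma poly_Pz_1: "poly (Pz p z) 1 = z"
  by (simp add: poly_Pz)

lemma prod_mset_norm_le:
  "(\<forall>x\<in>#A. norm (a - x) \<le> m) \<Longrightarrow> norm (\<Prod>x\<in>#A. (a - x::complex)) \<le> m ^ size A"
proof (induction A)
  case empty then show ?case by simp
next
  case (add x A)
  then have "norm (a - x) * norm (\<Prod>x\<in>#A. (a - x::complex)) \<le> m * m ^ size A"
    by (intro mult_mono) (auto intro: order_trans[OF norm_ge_zero])
  then show ?case by (simp add: norm_mult)
qed

lemma max_root_ge:
  fixes m :: complex
  assumes p: "p \<ge> 2" and m: "\<forall>v. poly (Pz p z) v = 0 \<longrightarrow> norm v \<le> norm m"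
  shows "norm m \<ge> 1/2"
proof (rule ccontr)
  assume "\<not> norm m \<ge> 1/2"
  then have lt: "norm m < 1/2" by simp
  define A where "A = proots (Pz p z)"
  have sz: "size A = p" unfolding A_def using degree_Pz[OF p] by (simp add: size_proots_complex)
  have inA: "\<And>x. x \<in># A \<Longrightarrow> norm x \<le> norm m" using m Pz_nz[OF p] A_def by auto
  have "norm z \<le> norm m ^ p"
  proof -
    have "norm z = norm (\<Prod>x\<in>#A. (0 - x))" using Pz_factor[OF p, of z 0] poly_Pz_0[OF p] A_def by simp
    also have "\<dots> \<le> norm m ^ size A" using inA by (intro prod_mset_norm_le) auto
    finally show ?thesis using sz by simp
  qed
  moreover have "(1 - norm m) ^ p \<le> norm z"
  proof -
    have "(1 - norm m) ^ size A \<le> norm (\<Prod>x\<in>#A. (1 - x))"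
    proof (intro prod_mset_norm_ge ballI)
      fix x assume "x \<in># A"
      then have "norm x \<le> norm m" by (rule inA)
      moreover have "1 - norm x \<le> norm (1 - x)" using norm_triangle_ineq2[of 1 x] by simp
      ultimately show "1 - norm m \<le> norm (1 - x)" by simp
    qed (use lt in simp)
    also have "\<dots> = norm z" using Pz_factor[OF p, of z 1] poly_Pz_1 A_def by simp
    finally show ?thesis using sz by simp
  qed
  ultimately have "(1 - norm m) ^ Suc (p-1) \<le> norm m ^ Suc (p-1)" using p by simp
  then have "1 - norm m \<le> norm m" by (rule power_le_imp_le_base) simp
  then show False using lt by simp
qed

lemma Mroot_props:
  assumes p: "p \<ge> 2" and z: "z \<in> FC_dom p"
  shows "poly (Pz p z) (Mroot p z) = 0" "norm (Mroot p z) \<ge> 1/2"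
    "\<And>v. poly (Pz p z) v = 0 \<Longrightarrow> v \<noteq> Mroot p z \<Longrightarrow> norm v < norm (Mroot p z)"
proof -
  have M: "isMax p z (Mroot p z)" by (rule isMax_Mroot[OF p z])
  then show "poly (Pz p z) (Mroot p z) = 0"
    "\<And>v. poly (Pz p z) v = 0 \<Longrightarrow> v \<noteq> Mroot p z \<Longrightarrow> norm v < norm (Mroot p z)"
    unfolding isMax_def by auto
  show "norm (Mroot p z) \<ge> 1/2"
    using M unfolding isMax_def by (intro max_root_ge[OF p]) force
qed

lemma open_FC_dom: "open (FC_dom p)"
proof -
  have "FC_dom p = - {z. Im z = 0 \<and> Re z \<ge> cFC p}" unfolding set_eq_iff by (simp add: FC_dom_iff)
  moreover have "closed {z. Im z = 0 \<and> Re z \<ge> cFC p}"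
    by (intro closed_Collect_conj closed_Collect_eq closed_Collect_le) (auto intro!: continuous_intros)
  ultimately show ?thesis by (simp add: open_Compl)
qed

lemma Mroot_cont:
  assumes p: "p \<ge> 2" and z0: "z0 \<in> FC_dom p"
  shows "continuous (at z0) (Mroot p)"
proof -
  define m0 where "m0 = Mroot p z0"
  define S0 where "S0 = {w. poly (Pz p z0) w = 0}"
  define Oth where "Oth = S0 - {m0}"
  have fO: "finite Oth" using roots_finite_ne[OF p] Oth_def S0_def by auto
  define g where "g = Min (insert 1 ((\<lambda>v. norm m0 - norm v) ` Oth))"
  have gpos: "g > 0" unfolding g_def using fO Mroot_props(3)[OF p z0] Oth_def S0_def m0_def
    by (subst Min_gr_iff) auto
  have gO: "\<And>v. poly (Pz p z0) v = 0 \<Longrightarrow> v \<noteq> m0 \<Longrightarrow> norm v \<le> norm m0 - g"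
  proof -
    fix v assume "poly (Pz p z0) v = 0" "v \<noteq> m0"
    then have "g \<le> norm m0 - norm v" unfolding g_def using fO Oth_def S0_def by (intro Min_le) auto
    then show "norm v \<le> norm m0 - g" by simp
  qed
  obtain d0 where d0: "d0 > 0" "ball z0 d0 \<subseteq> FC_dom p" by (rule openE[OF open_FC_dom z0])
  show ?thesis unfolding continuous_at_eps_delta
  proof (intro allI impI)
    fix e :: real assume e: "e > 0"
    define \<tau> where "\<tau> = min (g/3) e"
    have \<tau>: "\<tau> > 0" "\<tau> \<le> g/3" "\<tau> \<le> e" using gpos e \<tau>_def by auto
    show "\<exists>d>0. \<forall>y. dist y z0 < d \<longrightarrow> dist (Mroot p y) (Mroot p z0) < e"
    proof (intro exI[of _ "min d0 (\<tau>^p)"] conjI allI impI)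
      show "min d0 (\<tau>^p) > 0" using d0 \<tau> by simp
      fix y assume y: "dist y z0 < min d0 (\<tau>^p)"
      have yD: "y \<in> FC_dom p" using y d0 by (auto simp: dist_commute)
      have dy: "norm (y - z0) < \<tau>^p" using y by (simp add: dist_norm)
      define my where "my = Mroot p y"
      have m0r: "poly (Pz p z0) m0 = 0" using Mroot_props(1)[OF p z0] m0_def by simp
      have myr: "poly (Pz p y) my = 0" using Mroot_props(1)[OF p yD] my_def by simp
      have "poly (Pz p y) m0 = y - z0" using m0r by (simp add: poly_Pz algebra_simps)
      then obtain r where r: "poly (Pz p y) r = 0" "norm (m0 - r) ^ p \<le> norm (y - z0)"
        using close_root[OF p, of y m0] by auto
      have "norm (m0 - r) ^ p < \<tau> ^ p" using r(2) dy by linarith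
      then have "norm (m0 - r) < \<tau>" by (rule power_less_imp_less_base) (use \<tau> in simp)
      moreover have "norm r \<le> norm my" using Mroot_props(3)[OF p yD r(1)] my_def by force
      ultimately have low: "norm my > norm m0 - \<tau>" using norm_triangle_ineq2[of m0 r] by simp
      have "poly (Pz p z0) my = z0 - y" using myr by (simp add: poly_Pz algebra_simps)
      then obtain s where s: "poly (Pz p z0) s = 0" "norm (my - s) ^ p \<le> norm (z0 - y)"
        using close_root[OF p, of z0 my] by auto
      have "norm (z0 - y) < \<tau>^p" using dy by (simp add: norm_minus_commute)
      then have "norm (my - s) ^ p < \<tau> ^ p" using s(2) by linarith
      then have ms: "norm (my - s) < \<tau>" by (rule power_less_imp_less_base) (use \<tau> in simp)
      have "s = m0"
      proof (rule ccontr)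
        assume "s \<noteq> m0"
        then have "norm s \<le> norm m0 - g" using gO s(1) by simp
        moreover have "norm my \<le> norm s + norm (my - s)" using norm_triangle_ineq2[of my s] by simp
        ultimately show False using low ms \<tau> by simp
      qed
      then show "dist (Mroot p y) (Mroot p z0) < e" using ms \<tau> my_def m0_def by (simp add: dist_norm)
    qed
  qed
qed

lemma cFC_pos: "p \<ge> 2 \<Longrightarrow> cFC p > 0"
  unfolding cFC_def by simp

lemma zero_in_FC: "p \<ge> 2 \<Longrightarrow> 0 \<in> FC_dom p"
  using cFC_pos[of p] by (simp add: FC_dom_iff)

lemma Mroot_0: assumes p: "p \<ge> 2" shows "Mroot p 0 = 1"
proof -
  have "isMax p 0 1" unfolding isMax_def
  proof (intro conjI allI impI)
    show "poly (Pz p 0) 1 = 0" by (simp add: poly_Pz)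
    fix v assume "poly (Pz p 0) v = 0" "v \<noteq> 1"
    then have "v^(p-1) = 0" by (simp add: poly_Pz)
    then have "v = 0" by simp
    then show "norm v < norm (1::complex)" by simp
  qed
  then show ?thesis using isMax_unique isMax_Mroot[OF p zero_in_FC[OF p]] by blast
qed

lemma Mroot_nz: "p \<ge> 2 \<Longrightarrow> z \<in> FC_dom p \<Longrightarrow> Mroot p z \<noteq> 0"
  using Mroot_props(2)[of p z] by auto

lemma Mroot_eq: "p \<ge> 2 \<Longrightarrow> z \<in> FC_dom p \<Longrightarrow> Mroot p z ^ (p-1) * (1 - Mroot p z) = z"
  using Mroot_props(1)[of p z] root_iff by metis

definition Dps :: "nat \<Rightarrow> complex \<Rightarrow> complex" where
  "Dps p w = w^(p-1-1) * (of_nat (p-1) - of_nat p * w)"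

lemma psi_deriv:
  assumes p: "p \<ge> 2"
  shows "((\<lambda>w. w^(p-1) * (1 - w)) has_field_derivative Dps p w) (at w)"
proof -
  have "((\<lambda>w. w^(p-1) * (1 - w)) has_field_derivative
          (of_nat (p-1) * w^(p-1-1) * (1 - w) + w^(p-1) * (0 - 1))) (at w)"
    by (auto intro!: derivative_eq_intros)
  also have "of_nat (p-1) * w^(p-1-1) * (1 - w) + w^(p-1) * (0 - 1) = Dps p w"
  proof -
    have "w^(p-1) = w^(p-1-1) * w" using p by (intro pow_split) simp
    moreover have "(of_nat p :: complex) = of_nat (p-1) + 1" using p by (simp add: of_nat_diff)
    ultimately show ?thesis unfolding Dps_def by (simp add: algebra_simps)
  qed
  finally show ?thesis .
qed

lemma Dps_nz:
  assumes p: "p \<ge> 2" and z: "z \<in> FC_dom p"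
  shows "Dps p (Mroot p z) \<noteq> 0"
proof
  define M where "M = Mroot p z"
  assume "Dps p (Mroot p z) = 0"
  then have "M^(p-1-1) = 0 \<or> of_nat (p-1) - of_nat p * M = 0" unfolding Dps_def M_def by simp
  moreover have "M \<noteq> 0" using Mroot_nz[OF p z] M_def by simp
  ultimately have "of_nat (p-1) = of_nat p * M" by simp
  then have Mq: "M = of_real ((real p - 1) / real p)" using p by (simp add: field_simps of_nat_diff)
  have "z = M^(p-1) * (1 - M)" using Mroot_eq[OF p z] M_def by simp
  also have "\<dots> = of_real (((real p - 1)/real p)^(p-1) * (1 - (real p - 1)/real p))" unfolding Mq by simp
  also have "\<dots> = of_real (cFC p)" using cFC_val[OF p] by simp
  finally have "z = of_real (cFC p)" .
  then show False using z by (simp add: FC_dom_iff)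
qed

lemma Mroot_deriv:
  assumes p: "p \<ge> 2" and z: "z \<in> FC_dom p"
  shows "(Mroot p has_field_derivative inverse (Dps p (Mroot p z))) (at z)"
  by (rule has_field_derivative_inverse_basic[OF psi_deriv[OF p] Dps_nz[OF p z] Mroot_cont[OF p z]
        open_FC_dom z]) (use Mroot_eq[OF p] in blast)

definition T0 :: "nat \<Rightarrow> complex \<Rightarrow> complex" where
  "T0 p z = (if z \<in> FC_dom p then inverse (Mroot p z) else 0)"

lemma T0_hol: assumes p: "p \<ge> 2" shows "T0 p holomorphic_on FC_dom p"
proof -
  have "(\<lambda>z. inverse (Mroot p z)) holomorphic_on FC_dom p"
    unfolding holomorphic_on_open[OF open_FC_dom]
  proof
    fix x assume x: "x \<in> FC_dom p"
    show "\<exists>f'. ((\<lambda>z. inverse (Mroot p z)) has_field_derivative f') (at x)"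
      using DERIV_inverse_fun[OF Mroot_deriv[OF p x] Mroot_nz[OF p x]] by blast
  qed
  then show ?thesis by (rule holomorphic_transform) (simp add: T0_def)
qed

lemma T0_props:
  assumes p: "p \<ge> 2"
  shows "T0 p 0 = 1" "\<And>z. z \<in> FC_dom p \<Longrightarrow> z * T0 p z ^ p - T0 p z + 1 = 0"
    "\<And>z. z \<notin> FC_dom p \<Longrightarrow> T0 p z = 0" "\<And>z. norm (T0 p z) \<le> 2"
proof -
  show "T0 p 0 = 1" using Mroot_0[OF p] zero_in_FC[OF p] by (simp add: T0_def)
  show "\<And>z. z \<notin> FC_dom p \<Longrightarrow> T0 p z = 0" by (simp add: T0_def)
  fix z
  show "norm (T0 p z) \<le> 2"
  proof (cases "z \<in> FC_dom p")
    case True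
    then have "norm (Mroot p z) \<ge> 1/2" by (rule Mroot_props(2)[OF p])
    then have "inverse (norm (Mroot p z)) \<le> inverse (1/2)" by (rule le_imp_inverse_le) simp
    then show ?thesis using True by (simp add: T0_def norm_inverse)
  qed (simp add: T0_def)
next
  fix z assume z: "z \<in> FC_dom p"
  define M where "M = Mroot p z"
  have M0: "M \<noteq> 0" using Mroot_nz[OF p z] M_def by simp
  have zM: "z = M^(p-1) * (1 - M)" using Mroot_eq[OF p z] M_def by simp
  have Mp: "M^p = M^(p-1) * M" using p by (intro pow_split) simp
  have "z * inverse M ^ p = (1 - M) * inverse M"
    unfolding zM using M0 Mp by (simp add: field_simps power_inverse)
  then show "z * T0 p z ^ p - T0 p z + 1 = 0"
    using z M0 by (simp add: T0_def M_def[symmetric] field_simps)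
qed

lemma FC_connected: assumes p: "p \<ge> 2" shows "connected (FC_dom p)"
proof (rule starlike_imp_connected)
  show "starlike (FC_dom p)" unfolding starlike_def
  proof (intro bexI[of _ 0] ballI)
    fix x assume x: "x \<in> FC_dom p"
    show "closed_segment 0 x \<subseteq> FC_dom p"
    proof
      fix y assume "y \<in> closed_segment 0 x"
      then obtain u :: real where u: "0 \<le> u" "u \<le> 1" "y = u *\<^sub>R x" by (auto simp: closed_segment_def)
      show "y \<in> FC_dom p"
      proof (rule ccontr)
        assume "y \<notin> FC_dom p"
        then have y: "Im y = 0" "Re y \<ge> cFC p" by (auto simp: FC_dom_iff)
        then have "u * Re x \<ge> cFC p" using u by simp
        then have "u > 0" using cFC_pos[OF p] u by (cases "u = 0") auto
        have "u * Im x = 0" using y(1) u(3) by simp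
        then have "Im x = 0" using \<open>u > 0\<close> by simp
        have "u * Re x > 0" using \<open>u * Re x \<ge> cFC p\<close> cFC_pos[OF p] by linarith
        then have "Re x > 0" using zero_less_mult_pos \<open>u > 0\<close> by blast
        have "Re x \<ge> u * Re x" using u(1,2) \<open>Re x > 0\<close> mult_left_le_one_le[of "Re x" u] by simp
        then have "Re x \<ge> cFC p" using \<open>u * Re x \<ge> cFC p\<close> by simp
        then show False using x \<open>Im x = 0\<close> by (simp add: FC_dom_iff)
      qed
    qed
  qed (rule zero_in_FC[OF p])
qed

lemma local_agree:
  fixes T1 T2 :: "complex \<Rightarrow> complex"
  assumes p: "p \<ge> 2"
    and h1: "T1 holomorphic_on FC_dom p" and h2: "T2 holomorphic_on FC_dom p"
    and o1: "T1 0 = 1" and o2: "T2 0 = 1"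
    and e1: "\<And>z. z \<in> FC_dom p \<Longrightarrow> z * T1 z ^ p - T1 z + 1 = 0"
    and e2: "\<And>z. z \<in> FC_dom p \<Longrightarrow> z * T2 z ^ p - T2 z + 1 = 0"
  shows "\<exists>r>0. ball 0 r \<subseteq> FC_dom p \<and> (\<forall>z\<in>ball 0 r. T1 z = T2 z)"
proof -
  have z0: "0 \<in> FC_dom p" by (rule zero_in_FC[OF p])
  have c1: "isCont T1 0" using h1 z0 open_FC_dom
    by (meson continuous_on_eq_continuous_at holomorphic_on_imp_continuous_on)
  have c2: "isCont T2 0" using h2 z0 open_FC_dom
    by (meson continuous_on_eq_continuous_at holomorphic_on_imp_continuous_on)
  define S where "S z = (\<Sum>i<p. T2 z ^ (p - Suc i) * T1 z ^ i)" for z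
  define h where "h z = z * S z - 1" for z
  have "isCont h 0" unfolding h_def S_def
    by (intro continuous_intros c1 c2)
  moreover have "h 0 \<noteq> 0" by (simp add: h_def)
  ultimately obtain e where e: "e > 0" "\<And>y. dist 0 y < e \<Longrightarrow> h y \<noteq> 0"
    using continuous_at_avoid by blast
  obtain d0 where d0: "d0 > 0" "ball 0 d0 \<subseteq> FC_dom p" by (rule openE[OF open_FC_dom z0])
  show ?thesis
  proof (intro exI[of _ "min e d0"] conjI ballI)
    show "min e d0 > 0" using e d0 by simp
    show "ball 0 (min e d0) \<subseteq> FC_dom p" using d0 by auto
    fix z :: complex assume z: "z \<in> ball 0 (min e d0)"
    then have zD: "z \<in> FC_dom p" using d0 by auto
    have "h z \<noteq> 0" using z e by auto
    have "0 = (z * T1 z ^ p - T1 z + 1) - (z * T2 z ^ p - T2 z + 1)" using e1[OF zD] e2[OF zD] by simp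
    also have "\<dots> = z * (T1 z ^ p - T2 z ^ p) - (T1 z - T2 z)" by (simp add: algebra_simps)
    also have "\<dots> = (T1 z - T2 z) * h z" unfolding h_def S_def power_diff_sumr2 by (simp add: algebra_simps)
    finally have "(T1 z - T2 z) * h z = 0" by simp
    then show "T1 z = T2 z" using \<open>h z \<noteq> 0\<close> by simp
  qed
qed

lemma FussCatalan_eq: assumes p: "p \<ge> 2" shows "FussCatalan p = T0 p"
  unfolding FussCatalan_def
proof (rule the_equality)
  show "T0 p holomorphic_on FC_dom p \<and> T0 p 0 = 1 \<and> (\<forall>z\<in>FC_dom p. z * T0 p z ^ p - T0 p z + 1 = 0) \<and>
    (\<forall>z. z \<notin> FC_dom p \<longrightarrow> T0 p z = 0)"
    using T0_hol[OF p] T0_props[OF p] by blast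
  fix T assume T: "T holomorphic_on FC_dom p \<and> T 0 = 1 \<and> (\<forall>z\<in>FC_dom p. z * T z ^ p - T z + 1 = 0) \<and>
    (\<forall>z. z \<notin> FC_dom p \<longrightarrow> T z = 0)"
  obtain r where r: "r > 0" "ball 0 r \<subseteq> FC_dom p" "\<forall>z\<in>ball 0 r. T z = T0 p z"
    using local_agree[OF p, of T "T0 p"] T T0_hol[OF p] T0_props[OF p] by blast
  show "T = T0 p"
  proof
    fix z show "T z = T0 p z"
    proof (cases "z \<in> FC_dom p")
      case True
      show ?thesis
        by (rule analytic_continuation_open[of "ball 0 r" "FC_dom p" T "T0 p" z])
           (use r T T0_hol[OF p] True FC_connected[OF p] open_FC_dom in auto)
    next
      case False then show ?thesis using T T0_props(3)[OF p] by simp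
    qed
  qed
qed

lemma FC_facts:
  assumes p: "p \<ge> 2"
  shows "norm (FussCatalan p z) \<le> 2"
    "z \<in> FC_dom p \<Longrightarrow> FussCatalan p z - 1 = z * FussCatalan p z ^ p"
    "z \<notin> FC_dom p \<Longrightarrow> FussCatalan p z = 0"
  unfolding FussCatalan_eq[OF p]
proof -
  show "norm (T0 p z) \<le> 2" by (rule T0_props(4)[OF p])
  show "z \<notin> FC_dom p \<Longrightarrow> T0 p z = 0" by (rule T0_props(3)[OF p])
  assume "z \<in> FC_dom p"
  from T0_props(2)[OF p this] show "T0 p z - 1 = z * T0 p z ^ p" by (simp add: algebra_simps)
qed

lemma csqrt_sub1: "norm (csqrt T - 1) \<le> norm (T - 1)"
proof -
  have eq: "(csqrt T - 1) * (csqrt T + 1) = T - 1"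
    using power2_csqrt[of T] by (simp add: algebra_simps power2_eq_square)
  have "1 \<le> Re (csqrt T + 1)" using Re_csqrt[of T] by simp
  also have "\<dots> \<le> norm (csqrt T + 1)" by (rule complex_Re_le_cmod)
  finally have "norm (csqrt T - 1) * 1 \<le> norm (csqrt T - 1) * norm (csqrt T + 1)"
    by (intro mult_left_mono) auto
  also have "\<dots> = norm (T - 1)" using eq by (metis norm_mult)
  finally show ?thesis by simp
qed

definition Af :: "nat \<Rightarrow> real" where "Af p = max (max (2^p) 3) (1 / cFC p)"

lemma f_bound:
  assumes p: "p \<ge> 2"
  shows "norm (csqrt (FussCatalan p z) - 1) \<le> Af p * min (norm z) 1"
proof (cases "z \<in> FC_dom p")
  case True
  define T where "T = FussCatalan p z"
  have T2: "norm T \<le> 2" using FC_facts(1)[OF p] T_def by simp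
  have "norm (csqrt T - 1) \<le> norm (T - 1)" by (rule csqrt_sub1)
  also have "\<dots> = norm z * norm T ^ p" using FC_facts(2)[OF p True] T_def by (simp add: norm_mult norm_power)
  also have "\<dots> \<le> norm z * 2 ^ p" using T2 by (intro mult_left_mono power_mono) auto
  finally have b1: "norm (csqrt T - 1) \<le> norm z * 2 ^ p" .
  have "norm (csqrt T - 1) \<le> norm (csqrt T) + 1" using norm_triangle_ineq4[of "csqrt T" 1] by simp
  also have "norm (csqrt T) = sqrt (norm T)" by simp
  also have "sqrt (norm T) \<le> 2" using T2 by (smt (verit) real_sqrt_le_iff real_sqrt_four)
  finally have b2: "norm (csqrt T - 1) \<le> 3" by simp
  have A1: "2^p \<le> Af p" "3 \<le> Af p" unfolding Af_def by auto
  show ?thesis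
  proof (cases "norm z \<le> 1")
    case True
    have "norm z * 2^p \<le> norm z * Af p" using A1 by (intro mult_left_mono) auto
    then have "norm z * 2^p \<le> Af p * norm z" by (simp add: mult.commute)
    then show ?thesis using b1 True T_def by simp
  next
    case False
    then show ?thesis using b2 A1 T_def by simp
  qed
next
  case False
  then have T0: "FussCatalan p z = 0" by (rule FC_facts(3)[OF p])
  have z: "Im z = 0" "Re z \<ge> cFC p" using False by (auto simp: FC_dom_iff)
  have nz: "norm z \<ge> cFC p" using z abs_Re_le_cmod[of z] by linarith
  have cp: "cFC p > 0" by (rule cFC_pos[OF p])
  have "1 \<le> Af p * min (norm z) 1"
  proof (cases "norm z \<le> 1")
    case True
    have "1 = (1 / cFC p) * cFC p" using cp by simp
    also have "\<dots> \<le> Af p * norm z" unfolding Af_def using nz cp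
      by (intro mult_mono) auto
    finally show ?thesis using True by simp
  next
    case False then show ?thesis unfolding Af_def by simp
  qed
  then show ?thesis using T0 by simp
qed

lemma min_powr: fixes x b :: real assumes "0 \<le> x" "0 < b" "b \<le> 1" shows "min x 1 \<le> x powr b"
proof (cases "x \<le> 1")
  case True
  show ?thesis
  proof (cases "x = 0")
    case False
    then have "x powr 1 \<le> x powr b" using True assms powr_mono'[of b 1 x] by auto
    then show ?thesis using True False assms by simp
  qed simp
next
  case False then show ?thesis using assms by (simp add: ge_one_powr_ge_zero)
qed

definition bet :: "nat \<Rightarrow> real" where "bet p = 1 / (4 * real p ^ 2)"
definition eexp :: "nat \<Rightarrow> real" where "eexp p = (real p + 1) / (2 * real p ^ 2)"

lemma bet_props: "p \<ge> 2 \<Longrightarrow> 0 < bet p \<and> bet p \<le> 1"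
proof -
  assume "p \<ge> 2"
  then have "1 \<le> real p" by simp
  then have "1 \<le> real p ^ 2" by (rule one_le_power)
  then have "1 \<le> 4 * real p ^ 2" by simp
  then have "1 / (4 * real p ^ 2) \<le> 1" by (auto simp: divide_le_eq)
  moreover have "0 < 1 / (4 * real p ^ 2)" using \<open>1 \<le> real p\<close> by simp
  ultimately show ?thesis unfolding bet_def by simp
qed

lemma integrand_bound:
  assumes p: "p \<ge> 2" and lam: "lam \<noteq> 0"
  shows "norm (g_lam p lam u) * (1 / (1 + norm u)) powr (2 + 1 / real p)
    \<le> Af p * norm lam powr bet p * (1 + norm u) powr (-(1 + eexp p))"
proof (cases "u = 0")
  case True
  then show ?thesis by (simp add: g_lam_def h_lam_def Af_def)
next
  case False
  define r where "r = norm u"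
  define L where "L = norm lam"
  define b where "b = bet p"
  have r: "r > 0" using False r_def by simp
  have L: "L > 0" using lam L_def by simp
  have b: "0 < b" "b \<le> 1" using bet_props[OF p] b_def by auto
  define z where "z = - lam * u ^ (2 * p - 2)"
  have nz: "norm z = L * r ^ (2*p-2)" unfolding z_def L_def r_def by (simp add: norm_mult norm_power)
  have gl: "g_lam p lam u = u * (csqrt (FussCatalan p z) - 1)"
    unfolding g_lam_def h_lam_def f_lam_def z_def by (simp add: algebra_simps)
  have Afpos: "Af p \<ge> 0" unfolding Af_def by simp
  have "norm (g_lam p lam u) \<le> r * (Af p * min (norm z) 1)"
    unfolding gl norm_mult r_def by (intro mult_left_mono f_bound[OF p]) auto
  also have "\<dots> \<le> r * (Af p * (norm z) powr b)"
    using min_powr[of "norm z" b] b Afpos r by (intro mult_left_mono) auto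
  also have "(norm z) powr b = L powr b * r powr (b * (2*p-2))"
    unfolding nz using L r by (simp add: powr_mult powr_realpow[symmetric] powr_powr mult.commute)
  also have "r powr (b * (2*p-2)) \<le> (1 + r) powr (b * (2*p-2))"
    using r b p by (intro powr_mono2) auto
  finally have G: "norm (g_lam p lam u) \<le> r * (Af p * (L powr b * (1 + r) powr (b * (2*p-2))))"
    using r Afpos by (simp add: mult_left_mono)
  have "r * (Af p * (L powr b * (1 + r) powr (b * (2*p-2))))
      \<le> (1 + r) powr 1 * (Af p * (L powr b * (1 + r) powr (b * (2*p-2))))"
    using r Afpos by (intro mult_right_mono) auto
  also have "\<dots> = Af p * L powr b * (1 + r) powr (1 + b * (2*p-2))"
    by (simp add: powr_add)
  finally have G2: "norm (g_lam p lam u) \<le> Af p * L powr b * (1 + r) powr (1 + b * (2*p-2))"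
    using G by linarith
  have pw: "(1 / (1 + r)) powr (2 + 1 / real p) = (1 + r) powr (-(2 + 1 / real p))"
    using r by (simp only: powr_minus_divide powr_divide powr_one_eq_one)
  have ex: "1 + b * real (2*p-2) + (-(2 + 1 / real p)) = -(1 + eexp p)"
    unfolding b_def bet_def eexp_def using p by (simp add: of_nat_diff field_simps power2_eq_square)
  have "norm (g_lam p lam u) * (1 / (1 + r)) powr (2 + 1 / real p)
     \<le> Af p * L powr b * (1 + r) powr (1 + b * (2*p-2)) * (1 + r) powr (-(2 + 1 / real p))"
    unfolding pw using G2 by (intro mult_right_mono) auto
  also have "\<dots> = Af p * L powr b * (1 + r) powr (-(1 + eexp p))"
    using ex by (simp add: powr_add[symmetric] mult.assoc)
  finally show ?thesis unfolding r_def L_def b_def .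
qed

definition AL :: "(complex \<Rightarrow> real) \<Rightarrow> (real \<Rightarrow> complex) \<Rightarrow> real \<Rightarrow> real" where
  "AL K g t = K (g t) * norm (vector_derivative g (at t))"

lemma AL_join:
  assumes i1: "(AL K g1 has_integral i1) {0..1}" and i2: "(AL K g2 has_integral i2) {0..1}"
    and s1: "finite s1" "\<forall>x\<in>{0..1} - s1. g1 differentiable at x"
    and s2: "finite s2" "\<forall>x\<in>{0..1} - s2. g2 differentiable at x"
  shows "(AL K (g1 +++ g2) has_integral (i1 + i2)) {0..1}"
    "\<exists>s. finite s \<and> (\<forall>x\<in>{0..1} - s. (g1 +++ g2) differentiable at x)"
proof -
  have j1: "((\<lambda>x. 2 * AL K g1 (2*x)) has_integral i1) {0..1/2}"
   and j2: "((\<lambda>x. 2 * AL K g2 (2*x - 1)) has_integral i2) {1/2..1}"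
    using has_integral_affinity01 [OF i1, where m= 2 and c=0, THEN has_integral_cmul [where c=2]]
          has_integral_affinity01 [OF i2, where m= 2 and c="-1", THEN has_integral_cmul [where c=2]]
    by (simp_all only: image_affinity_atLeastAtMost_div_diff, simp_all add: mult_ac)
  have d1: "((g1 +++ g2) has_vector_derivative 2 *\<^sub>R vector_derivative g1 (at (z*2))) (at z)"
      if "0 \<le> z" "z*2 < 1" "z*2 \<notin> s1" for z
  proof (rule has_vector_derivative_transform_within)
    show "0 < \<bar>z - 1/2\<bar>"
      using that by auto
    have "((*) 2 has_vector_derivative 2) (at z)"
      by (simp add: has_vector_derivative_def has_derivative_def bounded_linear_mult_left)
    moreover have "(g1 has_vector_derivative vector_derivative g1 (at (z * 2))) (at (2 * z))"
      using s1 that by (auto simp: algebra_simps vector_derivative_works)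
    ultimately
    show "((\<lambda>x. g1 (2 * x)) has_vector_derivative 2 *\<^sub>R vector_derivative g1 (at (z * 2))) (at z)"
      by (intro vector_diff_chain_at [simplified o_def])
  qed (use that in \<open>simp_all add: joinpaths_def dist_real_def abs_if split: if_split_asm\<close>)
  have d2: "((g1 +++ g2) has_vector_derivative 2 *\<^sub>R vector_derivative g2 (at (z*2 - 1))) (at z)"
      if "1 < z*2" "z \<le> 1" "z*2 - 1 \<notin> s2" for z
  proof (rule has_vector_derivative_transform_within)
    show "0 < \<bar>z - 1/2\<bar>"
      using that by auto
    have "((\<lambda>x. 2 * x - 1) has_vector_derivative 2) (at z)"
      by (simp add: has_vector_derivative_def has_derivative_def bounded_linear_mult_left)
    moreover have "(g2 has_vector_derivative vector_derivative g2 (at (z * 2 - 1))) (at (2 * z - 1))"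
      using s2 that by (auto simp: algebra_simps vector_derivative_works)
    ultimately
    show "((\<lambda>x. g2 (2 * x - 1)) has_vector_derivative 2 *\<^sub>R vector_derivative g2 (at (z * 2 - 1))) (at z)"
      by (intro vector_diff_chain_at [simplified o_def])
  qed (use that in \<open>simp_all add: joinpaths_def dist_real_def abs_if split: if_split_asm\<close>)
  have "(AL K (g1 +++ g2) has_integral i1) {0..1/2}"
  proof (rule has_integral_spike_finite [OF _ _ j1])
    show "finite (insert (1/2) ((*) 2 -` s1))"
      using s1 by (force intro: finite_vimageI [where h = "(*)2"] inj_onI)
    fix x assume x: "x \<in> {0..1/2} - insert (1/2) ((*) 2 -` s1)"
    then have "vector_derivative (g1 +++ g2) (at x) = 2 *\<^sub>R vector_derivative g1 (at (x*2))"
      using d1[of x] by (intro vector_derivative_at) (auto simp: mult.commute)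
    then show "AL K (g1 +++ g2) x = 2 * AL K g1 (2*x)"
      using x by (simp add: AL_def joinpaths_def mult.commute)
  qed
  moreover have "(AL K (g1 +++ g2) has_integral i2) {1/2..1}"
  proof (rule has_integral_spike_finite [OF _ _ j2])
    show "finite (insert (1/2) ((\<lambda>x. 2 * x - 1) -` s2))"
      using s2 by (force intro: finite_vimageI [where h = "\<lambda>x. 2*x-1"] inj_onI)
    fix x assume x: "x \<in> {1/2..1} - insert (1/2) ((\<lambda>x. 2 * x - 1) -` s2)"
    then have "vector_derivative (g1 +++ g2) (at x) = 2 *\<^sub>R vector_derivative g2 (at (x*2 - 1))"
      using d2[of x] by (intro vector_derivative_at) (auto simp: mult.commute)
    then show "AL K (g1 +++ g2) x = 2 * AL K g2 (2*x - 1)"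
      using x by (simp add: AL_def joinpaths_def mult.commute)
  qed
  ultimately show "(AL K (g1 +++ g2) has_integral (i1 + i2)) {0..1}"
    by (simp add: has_integral_combine [where c = "1/2"])
  show "\<exists>s. finite s \<and> (\<forall>x\<in>{0..1} - s. (g1 +++ g2) differentiable at x)"
  proof (intro exI conjI ballI)
    show "finite ({1/2} \<union> ((*) 2 -` s1) \<union> ((\<lambda>x. 2 * x - 1) -` s2))"
      using s1 s2 by (auto intro!: finite_vimageI inj_onI)
    fix x assume x: "x \<in> {0..1} - ({1/2} \<union> ((*) 2 -` s1) \<union> ((\<lambda>x. 2 * x - 1) -` s2))"
    show "(g1 +++ g2) differentiable at x"
    proof (cases "x*2 < 1")
      case True
      then show ?thesis using d1[of x] x differentiableI_vector by (auto simp: mult.commute)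
    next
      case False
      then have "1 < x*2" using x by auto
      then show ?thesis using d2[of x] x differentiableI_vector by (auto simp: mult.commute)
    qed
  qed
qed

definition good :: "(complex \<Rightarrow> real) \<Rightarrow> (real \<Rightarrow> complex) \<Rightarrow> real \<Rightarrow> bool" where
  "good K g B \<longleftrightarrow> (\<exists>I. (AL K g has_integral I) {0..1} \<and> I \<le> B) \<and>
     (\<exists>s. finite s \<and> (\<forall>x\<in>{0..1} - s. g differentiable at x))"

lemma good_join: "good K g1 B1 \<Longrightarrow> good K g2 B2 \<Longrightarrow> good K (g1 +++ g2) (B1 + B2)"
  unfolding good_def
proof (elim conjE exE)
  fix I1 I2 s1 s2
  assume i1: "(AL K g1 has_integral I1) {0..1}" "I1 \<le> B1"
    and i2: "(AL K g2 has_integral I2) {0..1}" "I2 \<le> B2"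
    and s1: "finite s1" "\<forall>x\<in>{0..1} - s1. g1 differentiable at x"
    and s2: "finite s2" "\<forall>x\<in>{0..1} - s2. g2 differentiable at x"
  show "(\<exists>I. (AL K (g1 +++ g2) has_integral I) {0..1} \<and> I \<le> B1 + B2) \<and>
    (\<exists>s. finite s \<and> (\<forall>x\<in>{0..1} - s. (g1 +++ g2) differentiable at x))"
    using AL_join[OF i1(1) i2(1) s1 s2] i1(2) i2(2) by (intro conjI exI[of _ "I1 + I2"]) auto
qed

lemma good_mono: "good K g B \<Longrightarrow> B \<le> B' \<Longrightarrow> good K g B'"
  unfolding good_def by force

lemma line_piece:
  fixes D e x y :: real and a :: complex
  assumes D: "D \<ge> 0" and e: "e > 0" and x: "x \<ge> 0" and y: "y \<ge> 0" and a: "norm a = 1"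
  shows "good (\<lambda>u. D * (1 + norm u) powr (-(1+e))) (linepath (of_real x * a) (of_real y * a)) (D / e)"
proof -
  define K where "K = (\<lambda>u::complex. D * (1 + norm u) powr (-(1+e)))"
  define A where "A = of_real x * a"
  define B where "B = of_real y * a"
  define h where "h s = 1 + ((1 - s) * x + s * y)" for s
  define \<sigma> where "\<sigma> = (if x \<le> y then 1 else -1::real)"
  have sig: "\<bar>y - x\<bar> = \<sigma> * (y - x)" unfolding \<sigma>_def by auto
  have h1: "h s \<ge> 1" if "s \<in> {0..1}" for s
    using that x y unfolding h_def by (auto intro!: add_nonneg_nonneg mult_nonneg_nonneg)
  have ALeq: "AL K (linepath A B) s = D * h s powr (-(1+e)) * \<bar>y - x\<bar>" if s: "s \<in> {0..1}" for s
  proof -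
    define v where "v = (1 - s) * x + s * y"
    have eq: "linepath A B s = of_real v * a"
      unfolding linepath_def A_def B_def v_def by (simp add: scaleR_conv_of_real algebra_simps)
    have v: "v \<ge> 0" using s x y unfolding v_def by (auto intro!: add_nonneg_nonneg mult_nonneg_nonneg)
    have "norm (linepath A B s) = \<bar>v\<bar> * norm a" unfolding eq norm_mult norm_of_real ..
    then have n: "norm (linepath A B s) = (1 - s) * x + s * y" using a v unfolding v_def by simp
    have "vector_derivative (linepath A B) (at s) = of_real (y - x) * a"
      unfolding A_def B_def by (simp add: algebra_simps)
    then have "norm (vector_derivative (linepath A B) (at s)) = \<bar>y - x\<bar> * norm a"
      by (simp only: norm_mult norm_of_real)
    then have "norm (vector_derivative (linepath A B) (at s)) = \<bar>y - x\<bar>" using a by simp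
    then show ?thesis unfolding AL_def K_def n h_def by simp
  qed
  define \<Phi> where "\<Phi> s = - \<sigma> * D / e * h s powr (-e)" for s
  have ee: "-(1+e) = -e - 1" by simp
  have der: "(\<Phi> has_vector_derivative (D * h s powr (-(1+e)) * \<bar>y - x\<bar>)) (at s within {0..1})"
    if s: "s \<in> {0..1}" for s
  proof -
    have hd: "(h has_real_derivative (y - x)) (at s)" unfolding h_def
      by (auto intro!: derivative_eq_intros)
    have "((\<lambda>s. h s powr (-e)) has_real_derivative (-e) * h s powr (-e - of_nat 1) * (y - x)) (at s)"
      using DERIV_fun_powr[OF hd, of "-e"] h1[OF s] by simp
    then have "(\<Phi> has_real_derivative (- \<sigma> * D / e) * ((-e) * h s powr (-e - of_nat 1) * (y - x))) (at s)"
      unfolding \<Phi>_def by (rule DERIV_cmult)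
    moreover have "(- \<sigma> * D / e) * ((-e) * h s powr (-e - of_nat 1) * (y - x)) = D * h s powr (-(1+e)) * \<bar>y - x\<bar>"
      unfolding ee sig using e by simp
    ultimately have "(\<Phi> has_real_derivative D * h s powr (-(1+e)) * \<bar>y - x\<bar>) (at s)" by simp
    then show ?thesis
      using has_real_derivative_iff_has_vector_derivative has_vector_derivative_at_within by blast
  qed
  have "((\<lambda>s. D * h s powr (-(1+e)) * \<bar>y - x\<bar>) has_integral (\<Phi> 1 - \<Phi> 0)) {0..1}"
    by (rule fundamental_theorem_of_calculus) (use der in auto)
  then have I: "(AL K (linepath A B) has_integral (\<Phi> 1 - \<Phi> 0)) {0..1}"
    by (rule has_integral_eq[rotated]) (use ALeq in simp)
  have pb: "0 \<le> h s powr (-e) \<and> h s powr (-e) \<le> 1" if "s \<in> {0..1}" for s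
  proof -
    have "1 \<le> h s powr e" using h1[OF that] e by (intro ge_one_powr_ge_zero) auto
    then have "1 / h s powr e \<le> 1" by (auto simp: divide_le_eq)
    then show ?thesis by (simp add: powr_minus_divide)
  qed
  have "\<Phi> 1 - \<Phi> 0 = \<sigma> * (h 0 powr (-e) - h 1 powr (-e)) * (D / e)" unfolding \<Phi>_def by (simp add: algebra_simps)
  also have "\<dots> \<le> 1 * (D / e)"
  proof (rule mult_right_mono)
    show "\<sigma> * (h 0 powr (-e) - h 1 powr (-e)) \<le> 1"
    proof -
      have gen: "\<And>u v::real. 0 \<le> u \<Longrightarrow> u \<le> 1 \<Longrightarrow> 0 \<le> v \<Longrightarrow> v \<le> 1 \<Longrightarrow> \<sigma> * (u - v) \<le> 1"
        unfolding \<sigma>_def by auto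
      show ?thesis using pb[of 0] pb[of 1] by (intro gen) auto
    qed
  qed (use D e in simp)
  finally have "\<Phi> 1 - \<Phi> 0 \<le> D / e" by simp
  moreover have "\<forall>x\<in>{0..1} - {}. linepath A B differentiable at x" by auto
  ultimately show ?thesis unfolding good_def K_def[symmetric] A_def[symmetric] B_def[symmetric]
    using I by blast
qed

lemma circ_piece:
  fixes D e r s t :: real
  assumes D: "D \<ge> 0" and e: "e > 0" and r: "r \<ge> 0"
  shows "good (\<lambda>u. D * (1 + norm u) powr (-(1+e))) (part_circlepath 0 r s t) (D * \<bar>t - s\<bar>)"
proof -
  define K where "K = (\<lambda>u::complex. D * (1 + norm u) powr (-(1+e)))"
  define c where "c = D * (1 + r) powr (-(1+e)) * (r * \<bar>t - s\<bar>)"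
  have ALeq: "AL K (part_circlepath 0 r s t) x = c" for x
  proof -
    have "norm (part_circlepath 0 r s t x) = r" using r
      by (simp add: part_circlepath_def norm_mult)
    moreover have "norm (vector_derivative (part_circlepath 0 r s t) (at x)) = r * \<bar>t - s\<bar>"
      using r by (simp add: vector_derivative_part_circlepath norm_mult flip: of_real_diff)
    ultimately show ?thesis unfolding AL_def K_def c_def by simp
  qed
  have I: "(AL K (part_circlepath 0 r s t) has_integral c) {0..1}"
  proof -
    have "AL K (part_circlepath 0 r s t) = (\<lambda>x. c)" using ALeq by (rule ext)
    then show ?thesis using has_integral_const_real[of c 0 1] by simp
  qed
  have "(1 + r) powr (-(1+e)) \<le> (1 + r) powr (-1)" using r e by (intro powr_mono) auto
  also have "\<dots> = 1 / (1 + r)" using r by (simp add: powr_minus_divide)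
  finally have "(1 + r) powr (-(1+e)) * r \<le> 1 / (1 + r) * r" using r by (intro mult_right_mono) auto
  also have "\<dots> \<le> 1" using r by (simp add: field_simps)
  finally have b: "(1 + r) powr (-(1+e)) * r \<le> 1" .
  have "c = D * \<bar>t - s\<bar> * ((1 + r) powr (-(1+e)) * r)" unfolding c_def by (simp add: algebra_simps)
  also have "\<dots> \<le> D * \<bar>t - s\<bar> * 1" using D b by (intro mult_left_mono) auto
  finally have "c \<le> D * \<bar>t - s\<bar>" by simp
  moreover have "\<forall>x\<in>{0..1} - {}. part_circlepath 0 r s t differentiable at x"
    using differentiable_part_circlepath[of 0 r s t _ UNIV] by auto
  ultimately show ?thesis unfolding good_def K_def[symmetric] using I by blast
qed

definition Wk :: "real \<Rightarrow> real \<Rightarrow> real" where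
  "Wk e \<psi> = 4 / e + \<bar>\<psi> - - \<psi>\<bar> + \<bar>(pi - \<psi>) - \<psi>\<bar> + \<bar>(pi + \<psi>) - (pi - \<psi>)\<bar> + \<bar>(2 * pi - \<psi>) - (pi + \<psi>)\<bar>"

lemma keyhole_good:
  fixes D e R \<psi> :: real
  assumes D: "D \<ge> 0" and e: "e > 0" and R: "R \<ge> 0"
  shows "good (\<lambda>u. D * (1 + norm u) powr (-(1+e))) (keyhole \<psi> R) (D * Wk e \<psi>)"
proof -
  define K where "K = (\<lambda>u::complex. D * (1 + norm u) powr (-(1+e)))"
  have L: "good K (linepath (cis a) (of_real R * cis a)) (D / e)" for a
    using line_piece[OF D e _ R, of 1 "cis a"] unfolding K_def by simp
  have L': "good K (linepath (of_real R * cis a) (cis a)) (D / e)" for a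
    using line_piece[OF D e R, of 1 "cis a"] unfolding K_def by simp
  have C: "good K (part_circlepath 0 r s t) (D * \<bar>t - s\<bar>)" if "r \<ge> 0" for r s t
    using circ_piece[OF D e that] unfolding K_def by simp
  have "good K (keyhole \<psi> R)
     (D / e + (D * \<bar>\<psi> - - \<psi>\<bar> + (D / e + (D * \<bar>(pi - \<psi>) - \<psi>\<bar> + (D / e +
       (D * \<bar>(pi + \<psi>) - (pi - \<psi>)\<bar> + (D / e + D * \<bar>(2 * pi - \<psi>) - (pi + \<psi>)\<bar>)))))))"
    unfolding keyhole_def
    by (intro good_join L L' C R) simp_all
  moreover have "D / e + (D * \<bar>\<psi> - - \<psi>\<bar> + (D / e + (D * \<bar>(pi - \<psi>) - \<psi>\<bar> + (D / e +
       (D * \<bar>(pi + \<psi>) - (pi - \<psi>)\<bar> + (D / e + D * \<bar>(2 * pi - \<psi>) - (pi + \<psi>)\<bar>)))))) = D * Wk e \<psi>"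
    unfolding Wk_def by (simp add: algebra_simps)
  ultimately show ?thesis unfolding K_def by simp
qed

theorem mainTheorem5:
  fixes p :: nat and \<epsilon> \<psi> \<eta> :: real
  assumes "p \<ge> 2" and "\<epsilon> > 0" and "\<eta> > 0"
    and "psi_ok p \<epsilon> \<psi>"
    and "\<forall>lam\<in>Pset \<epsilon> \<eta>. cut_radius p lam > 1"
  shows "\<exists>C. \<forall>R>1. \<forall>lam\<in>Pset \<epsilon> \<eta>.
           arclength_integral
             (\<lambda>u. cmod (g_lam p lam u) * (1 / (1 + cmod u)) powr (2 + 1 / real p))
             (keyhole \<psi> R)
           \<le> C * cmod lam powr (1 / (4 * real p ^ 2))"
proof (intro exI[of _ "Af p * Wk (eexp p) \<psi>"] allI impI ballI)
  have p: "p \<ge> 2" by fact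
  fix R :: real and lam assume R: "R > 1" and lam: "lam \<in> Pset \<epsilon> \<eta>"
  have lam0: "lam \<noteq> 0" using lam by (auto simp: Pset_def)
  define e where "e = eexp p"
  have e: "e > 0" unfolding e_def eexp_def using p by simp
  define D where "D = Af p * cmod lam powr bet p"
  have D: "D \<ge> 0" unfolding D_def Af_def by simp
  define K where "K = (\<lambda>u::complex. D * (1 + norm u) powr (-(1+e)))"
  define F where "F = (\<lambda>u. cmod (g_lam p lam u) * (1 / (1 + cmod u)) powr (2 + 1 / real p))"
  define \<gamma> where "\<gamma> = keyhole \<psi> R"
  have W: "Wk e \<psi> \<ge> 0" unfolding Wk_def using e by simp
  have FK: "F u \<le> K u" for u
    using integrand_bound[OF p lam0, of u] unfolding F_def K_def D_def e_def by (simp add: mult.assoc)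
  have "good K \<gamma> (D * Wk e \<psi>)" unfolding K_def \<gamma>_def using keyhole_good[OF D e] R by simp
  then obtain I where I: "(AL K \<gamma> has_integral I) {0..1}" "I \<le> D * Wk e \<psi>"
    unfolding good_def by blast
  have AL_eq: "arclength_integral F \<gamma> = integral {0..1} (AL F \<gamma>)"
    unfolding arclength_integral_def AL_def ..
  have "integral {0..1} (AL F \<gamma>) \<le> D * Wk e \<psi>"
  proof (cases "AL F \<gamma> integrable_on {0..1}")
    case True
    have "integral {0..1} (AL F \<gamma>) \<le> integral {0..1} (AL K \<gamma>)"
      by (rule integral_le[OF True]) (use I FK in \<open>auto simp: AL_def intro: mult_right_mono\<close>)
    also have "\<dots> = I" using I by (simp add: integral_unique)
    finally show ?thesis using I by simp
  next
    case False
    then show ?thesis using D W by (simp add: not_integrable_integral)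
  qed
  then have "arclength_integral F \<gamma> \<le> D * Wk e \<psi>" using AL_eq by simp
  also have "D * Wk e \<psi> = Af p * Wk (eexp p) \<psi> * cmod lam powr (1 / (4 * real p ^ 2))"
    unfolding D_def e_def bet_def by (simp add: algebra_simps)
  finally show "arclength_integral
             (\<lambda>u. cmod (g_lam p lam u) * (1 / (1 + cmod u)) powr (2 + 1 / real p))
             (keyhole \<psi> R) \<le> Af p * Wk (eexp p) \<psi> * cmod lam powr (1 / (4 * real p ^ 2))"
    unfolding F_def \<gamma>_def .
qed

end
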